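(* Let $p\geq3$ be prime. Then in $\mathbb{L}_p$, \[\left(\sum_{l=0}^{p-1}\frac{(-1)^l}{l!}\zeta_{2(p-1)}^l p^{\frac{l}{p-1}}\right)^p-1=O\left(p^{2+\frac{1}{p-1}}\right).\]
   Context: $\mathbb{L}_p$ is the $p$-adic Mal'cev–Neumann field of formal sums $\sum_{x\in\mathbb{Q}}[\alpha_x]p^x$ ($\alpha_x\in\bar{\mathbb{F}}_p$, $[\cdot]$ Teichmüller lift, well-ordered support), containing $\mathbb{Q}_p$, valuation $v_p$ = minimum of support; $p^x$ is the element with support $\{x\}$ and coefficient $1$. $\zeta_{2(p-1)}$ is (the Teichmüller lift of) a fixed primitive $2(p-1)$-th root of unity in $\bar{\mathbb{F}}_p$; $l!$ is the ordinary factorial. $\alpha=O(p^x)$ means $v_p(\alpha)\geq x$. *)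

theory Defs
  imports "HOL-Library.Extended_Real" "HOL-Computational_Algebra.Primes"
begin

text \<open>The Mal'cev--Neumann field is not available in Isabelle/HOL.  We axiomatise the
structure of it that the statement uses: a field of characteristic 0 with a
valuation v (values in the extended reals, v x = \<infinity> iff x = 0) normalised by
v p = 1, a multiplicative system of rational powers p^x (x :: rat) extending p^1 = p,
and an element zeta which is a primitive 2(p-1)-th root of unity.\<close>

definition is_valuation :: "nat \<Rightarrow> ('a::field_char_0 \<Rightarrow> ereal) \<Rightarrow> bool" where
  "is_valuation p v \<longleftrightarrow>
     (\<forall>x. v x = \<infinity> \<longleftrightarrow> x = 0) \<and>
     (\<forall>x y. v (x * y) = v x + v y) \<and>
     (\<forall>x y. min (v x) (v y) \<le> v (x + y)) \<and>
     v (of_nat p) = 1"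

text \<open>P x plays the role of the element p^x (support {x}, coefficient 1).\<close>
definition is_rat_power_system :: "nat \<Rightarrow> (rat \<Rightarrow> 'a::field_char_0) \<Rightarrow> bool" where
  "is_rat_power_system p P \<longleftrightarrow>
     (\<forall>x y. P (x + y) = P x * P y) \<and> P 1 = of_nat p"

definition primitive_root_of_unity :: "nat \<Rightarrow> 'a::field \<Rightarrow> bool" where
  "primitive_root_of_unity n z \<longleftrightarrow> 0 < n \<and> z ^ n = 1 \<and> (\<forall>k. 0 < k \<and> k < n \<longrightarrow> z ^ k \<noteq> 1)"

definition bigO_p :: "('a \<Rightarrow> ereal) \<Rightarrow> 'a \<Rightarrow> real \<Rightarrow> bool" where
  "bigO_p v a c \<longleftrightarrow> ereal c \<le> v a"

end

theory Submission
  imports Defs "HOL-Computational_Algebra.Polynomial" "HOL-Number_Theory.Residues"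
begin

hide_const (open) UnivPoly.coeff UnivPoly.monom module.smult

locale vctx =
  fixes p :: nat and v :: "'a::field_char_0 \<Rightarrow> ereal"
  assumes val: "is_valuation p v" and pr: "prime p"
begin

lemma v_zero[simp]: "v 0 = \<infinity>" using val unfolding is_valuation_def by blast
lemma v_inf_iff: "v a = \<infinity> \<longleftrightarrow> a = 0" using val unfolding is_valuation_def by blast
lemma v_mult: "v (a * b) = v a + v b" using val unfolding is_valuation_def by blast
lemma v_add: "min (v a) (v b) \<le> v (a + b)" using val unfolding is_valuation_def by blast
lemma v_p[simp]: "v (of_nat p) = 1" using val unfolding is_valuation_def by blast

lemma v_one[simp]: "v 1 = 0"
proof -
  have "v (of_nat p) = v (of_nat p * 1)" by simp
  then have "1 = 1 + v 1" by (simp only: v_mult v_p)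
  then show ?thesis by (cases "v 1") auto
qed

lemma v_neg1[simp]: "v (-1) = 0"
proof -
  have "v 1 = v ((-1) * (-1))" by simp
  then have "0 = v (-1) + v (-1)" by (simp only: v_mult v_one)
  moreover have "v (-1) \<noteq> \<infinity>" using v_inf_iff by simp
  ultimately show ?thesis by (cases "v (-1)") auto
qed

lemma v_uminus[simp]: "v (- a) = v a"
proof -
  have "v (-a) = v ((-1) * a)" by simp
  also have "\<dots> = v a" by (simp only: v_mult v_neg1) simp
  finally show ?thesis .
qed

lemma v_finite: assumes "a \<noteq> 0" shows "\<exists>r. v a = ereal r"
proof -
  have "v (a * inverse a) = 0" using assms by simp
  then have "v a + v (inverse a) = 0" by (simp only: v_mult)
  moreover have "v a \<noteq> \<infinity>" "v (inverse a) \<noteq> \<infinity>" using assms v_inf_iff by auto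
  ultimately show ?thesis by (cases "v a"; cases "v (inverse a)") auto
qed

lemma v_ge_mult: "v a \<ge> ereal r \<Longrightarrow> v b \<ge> ereal s \<Longrightarrow> v (a * b) \<ge> ereal (r + s)"
  unfolding v_mult by (metis add_mono plus_ereal.simps(1))

lemma v_ge_add: "v a \<ge> c \<Longrightarrow> v b \<ge> c \<Longrightarrow> v (a + b) \<ge> c"
  using v_add[of a b] by (meson min.bounded_iff order_trans)

lemma v_ge_diff: "v a \<ge> c \<Longrightarrow> v b \<ge> c \<Longrightarrow> v (a - b) \<ge> c"
  using v_ge_add[where a=a and b="-b" and c=c] by simp

lemma v_ge_sum: "finite A \<Longrightarrow> (\<And>i. i \<in> A \<Longrightarrow> v (f i) \<ge> c) \<Longrightarrow> v (sum f A) \<ge> c"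
  by (induction A rule: finite_induct) (auto intro!: v_ge_add)

lemma v_nat_ge: "v (of_nat n) \<ge> 0"
proof (induction n)
  case (Suc n)
  then show ?case using v_ge_add[where a=1 and b="of_nat n" and c=0] by (simp add: add.commute)
qed simp

lemma v_int_ge: "v (of_int z) \<ge> 0"
proof (cases "z \<ge> 0")
  case True
  then show ?thesis using v_nat_ge[of "nat z"] by simp
next
  case False
  then have "of_int z = - (of_nat (nat (-z)) :: 'a)" by simp
  then show ?thesis using v_nat_ge[of "nat (-z)"] by simp
qed

lemma v_coprime: assumes "coprime m p" shows "v (of_nat m) = 0"
proof -
  have "gcd (int m) (int p) = 1" using assms by (simp add: coprime_iff_gcd_eq_1 gcd_int_def)
  then obtain u w where uw: "u * int m + w * int p = 1" using bezout_int[of "int m" "int p"] by auto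
  then have "(of_int u * of_nat m + of_int w * of_nat p :: 'a) = 1"
    by (metis of_int_1 of_int_add of_int_mult of_int_of_nat_eq)
  then have "0 = v (of_int u * of_nat m + of_int w * of_nat p :: 'a)" by simp
  then have h: "min (v (of_int u) + v (of_nat m :: 'a)) (v (of_int w) + 1) \<le> 0"
    using v_add[of "of_int u * of_nat m" "of_int w * of_nat p"] by (simp add: v_mult)
  show ?thesis
  proof (rule ccontr)
    assume "v (of_nat m :: 'a) \<noteq> 0"
    then have "v (of_nat m :: 'a) > 0" using v_nat_ge[of m] by simp
    moreover have "v (of_int u :: 'a) \<ge> 0" "v (of_int w :: 'a) \<ge> 0" using v_int_ge by auto
    ultimately have A1: "v (of_int u) + v (of_nat m :: 'a) > 0"
      by (cases "v (of_int u :: 'a)"; cases "v (of_nat m :: 'a)"; simp)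
    have A2: "v (of_int w :: 'a) + 1 > 0" using \<open>v (of_int w :: 'a) \<ge> 0\<close>
      by (cases "v (of_int w :: 'a)"; simp)
    show False using h A1 A2 by (metis min_less_iff_conj not_le)
  qed
qed

lemma v_inverse0: assumes "v a = 0" shows "v (inverse a) = 0"
proof -
  have "a \<noteq> 0" using assms by auto
  then have "v (a * inverse a) = 0" by simp
  then show ?thesis using assms by (simp add: v_mult)
qed

lemma v_fact: assumes "n < p" shows "v (fact n :: 'a) = 0"
proof -
  have "\<not> p dvd fact n" using prime_dvd_fact_iff[OF pr] assms by simp
  then have "coprime (fact n) p" using pr by (simp add: prime_imp_coprime coprime_commute)
  then show ?thesis using v_coprime by (metis of_nat_fact)
qed

lemma v_pow: assumes "v a = ereal r" shows "v (a ^ n) = ereal (real n * r)"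
  by (induction n) (auto simp: v_mult assms algebra_simps)

end

context vctx begin

lemma wilson_nat: "p dvd fact (p - 1) + 1"
proof -
  have "[fact (p - 1) = - 1] (mod int p)" using wilson_theorem[of p] pr by simp
  then show ?thesis
    by (metis (mono_tags, opaque_lifting)
    ab_group_add_class.ab_diff_conv_add_uminus add.inverse_inverse
    cong_iff_dvd_diff int_dvd_int_iff of_nat_1 of_nat_add of_nat_fact)
qed

lemma v_notdvd: assumes "\<not> p dvd m" shows "v (of_nat m) = 0"
proof -
  have "coprime p m" using prime_imp_coprime[OF pr assms] .
  then show ?thesis using v_coprime by (simp add: coprime_commute)
qed

lemma v_notdvd_mult: assumes "\<not> p dvd m" shows "v (of_nat m * a) = v a"
  using v_notdvd[OF assms] by (simp add: v_mult)

definition intp :: "'a poly \<Rightarrow> bool" where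
  "intp f \<longleftrightarrow> (\<forall>n. v (coeff f n) \<ge> 0)"

lemma intp_mult: assumes "intp f" "intp g" shows "intp (f * g)"
  unfolding intp_def coeff_mult
proof
  fix n
  show "0 \<le> v (\<Sum>i\<le>n. coeff f i * coeff g (n - i))"
  proof (rule v_ge_sum)
    fix i
    have "v (coeff f i * coeff g (n - i)) \<ge> ereal (0 + 0)"
      using assms unfolding intp_def by (intro v_ge_mult) (auto simp: zero_ereal_def)
    then show "0 \<le> v (coeff f i * coeff g (n - i))" by (simp add: zero_ereal_def)
  qed simp
qed

lemma intp_one: "intp 1"
  unfolding intp_def by (simp add: coeff_1)

lemma intp_power: "intp f \<Longrightarrow> intp (f ^ n)"
  by (induction n) (auto intro: intp_mult intp_one)

lemma intp_monom: "v c \<ge> 0 \<Longrightarrow> intp (monom c n)"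
  unfolding intp_def by simp

end

definition TX :: "nat \<Rightarrow> 'a::field_char_0 poly" where
  "TX p = (\<Sum>l<p. monom (1 / fact l) l)"

lemma coeff_TX: "coeff (TX p) n = (if n < p then 1 / fact n else 0)"
  by (simp add: TX_def coeff_sum)

lemma poly_TX: "poly (TX p) x = (\<Sum>l<p. x ^ l / fact l)"
  by (simp add: TX_def poly_sum poly_monom)

lemma pderiv_TX: assumes "p \<ge> 1"
  shows "pderiv (TX p :: 'a::field_char_0 poly) = TX p - monom (1 / fact (p - 1)) (p - 1)"
proof (rule poly_eqI)
  fix n
  show "coeff (pderiv (TX p :: 'a poly)) n = coeff (TX p - monom (1 / fact (p - 1)) (p - 1)) n"
  proof (cases "Suc n < p")
    case True
    have "of_nat (Suc n) * (1 / fact (Suc n)) = (1 / fact n :: 'a)"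
      by (simp add: field_simps del: of_nat_Suc)
    then show ?thesis using True by (auto simp: coeff_pderiv coeff_TX)
  next
    case False
    then show ?thesis using assms by (auto simp: coeff_pderiv coeff_TX)
  qed
qed

locale vctx2 = vctx p v for p :: nat and v :: "'a::field_char_0 \<Rightarrow> ereal" +
  fixes x :: 'a
  assumes p3: "p \<ge> 3" and xp: "x ^ (p - 1) = - of_nat p"
begin

definition e :: real where "e = 1 / real (p - 1)"

lemma e_prop: "e * real (p - 1) = 1" "e > 0"
  using p3 by (auto simp: e_def)

lemma v_x: "v x = ereal e"
proof -
  have "x \<noteq> 0" using xp p3 by (auto simp: zero_power)
  then obtain r where r: "v x = ereal r" using v_finite by blast
  have "v (x ^ (p - 1)) = 1" using xp by simp
  then have "real (p - 1) * r = 1" using v_pow[OF r, of "p - 1"]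
    by (metis ereal.inject one_ereal_def)
  moreover have "real (p - 1) \<noteq> 0" using p3 by simp
  ultimately have "r = e" unfolding e_def by (simp add: eq_divide_eq mult.commute)
  then show ?thesis using r by simp
qed

lemma intp_TX: "intp (TX p)"
  unfolding intp_def coeff_TX
  using v_fact v_inverse0 by (simp add: divide_inverse)

definition M :: "'a poly" where "M = monom (1 / fact (p - 1)) (p - 1)"
definition c :: "nat \<Rightarrow> 'a" where "c n = coeff (TX p ^ p) n"
definition h :: "nat \<Rightarrow> 'a" where "h n = coeff (M * TX p ^ (p - 1)) n"

lemma rec: "of_nat (Suc n) * c (Suc n) = of_nat p * c n - of_nat p * h n"
proof -
  have sp: "Suc (p - 1) = p" using p3 by simp
  have "pderiv (TX p ^ p) = smult (of_nat p) (TX p ^ (p - 1)) * pderiv (TX p :: 'a poly)"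
    using pderiv_power_Suc[of "TX p :: 'a poly" "p - 1"] unfolding sp .
  also have "\<dots> = smult (of_nat p) (TX p ^ p - M * TX p ^ (p - 1))"
  proof -
    have tp: "TX p ^ p = TX p ^ (p - 1) * (TX p :: 'a poly)"
      using power_Suc2[of "TX p :: 'a poly" "p - 1"] unfolding sp .
    have "pderiv (TX p :: 'a poly) = TX p - M" using p3 pderiv_TX[of p] unfolding M_def by simp
    then show ?thesis unfolding tp by (simp add: left_diff_distrib mult.commute)
  qed
  finally have "coeff (pderiv (TX p ^ p)) n = coeff (smult (of_nat p) (TX p ^ p - M * TX p ^ (p - 1))) n"
    by simp
  then show ?thesis by (simp add: coeff_pderiv c_def h_def algebra_simps)
qed

lemma h_low: "n < p - 1 \<Longrightarrow> h n = 0"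
  unfolding h_def M_def by (simp add: coeff_monom_mult)

lemma h_top: "h (p - 1) = 1 / fact (p - 1)"
  unfolding h_def M_def by (simp add: coeff_monom_mult coeff_0_power coeff_TX)

lemma int_h: "v (h n) \<ge> 0"
  using intp_mult[OF intp_monom intp_power[OF intp_TX]] v_fact[of "p - 1"] v_inverse0 p3
  unfolding h_def M_def intp_def by (simp add: divide_inverse)

lemma int_c: "v (c n) \<ge> 0"
  using intp_power[OF intp_TX] unfolding c_def intp_def by simp

lemma c0: "c 0 = 1"
  unfolding c_def by (simp add: coeff_0_power coeff_TX)

lemma c1: "c 1 = of_nat p"
  using rec[of 0] h_low[of 0] p3 c0 by simp

lemma c_low: "n \<le> p - 1 \<Longrightarrow> v (c n) \<ge> ereal (real n)"
proof (induction n)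
  case 0
  then show ?case using c0 by (simp add: zero_ereal_def)
next
  case (Suc n)
  have nd: "\<not> p dvd Suc n" using Suc.prems p3 by (auto dest: dvd_imp_le)
  have "v (c (Suc n)) = v (of_nat (Suc n) * c (Suc n))" using v_notdvd_mult[OF nd] by simp
  also have "\<dots> = v (of_nat p * c n)" using rec[of n] h_low[of n] Suc.prems by simp
  also have "\<dots> = 1 + v (c n)" by (simp add: v_mult)
  also have "\<dots> \<ge> 1 + ereal (real n)"
  proof -
    have IH: "ereal (real n) \<le> v (c n)" using Suc by simp
    then show ?thesis by (rule add_left_mono)
  qed
  finally have "v (c (Suc n)) \<ge> 1 + ereal (real n)" .
  moreover have "1 + ereal (real n) = ereal (real (Suc n))" by (simp add: one_ereal_def)
  ultimately show ?case by (simp add: add.commute)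
qed

lemma c_p: "c p = c (p - 1) - 1 / fact (p - 1)"
proof -
  have "of_nat p * c p = of_nat p * c (p - 1) - of_nat p * h (p - 1)"
    using rec[of "p - 1"] p3 by (simp add: Suc_diff_1)
  then have "of_nat p * c p = of_nat p * (c (p - 1) - 1 / fact (p - 1))"
    using h_top by (simp add: algebra_simps)
  moreover have "(of_nat p :: 'a) \<noteq> 0" using p3 by simp
  ultimately show ?thesis by simp
qed

lemma v_one_minus_cp: "v (1 - c p) \<ge> 1"
proof -
  obtain k where k: "fact (p - 1) + 1 = p * k" using wilson_nat by blast
  have fz: "(fact (p - 1) :: 'a) \<noteq> 0" by simp
  have vf: "v (fact (p - 1) :: 'a) = 0" using v_fact[of "p - 1"] p3 by simp
  have "(fact (p - 1) :: 'a) * (1 + 1 / fact (p - 1)) = fact (p - 1) + 1"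
    using fz by (simp add: field_simps)
  also have "\<dots> = of_nat (fact (p - 1) + 1)" by simp
  also have "\<dots> = of_nat (p * k)" by (simp only: k)
  also have "\<dots> = of_nat p * of_nat k" by simp
  finally have "v ((fact (p - 1) :: 'a) * (1 + 1 / fact (p - 1))) = v (of_nat p * (of_nat k :: 'a))"
    by simp
  then have eqv: "v (1 + 1 / fact (p - 1) :: 'a) = 1 + v (of_nat k :: 'a)"
    by (simp only: v_mult vf v_p add_0)
  have "1 + v (of_nat k :: 'a) \<ge> 1 + 0" using v_nat_ge[of k] by (rule add_left_mono)
  then have A: "v (1 + 1 / fact (p - 1) :: 'a) \<ge> ereal 1" using eqv by (simp add: one_ereal_def)
  have "ereal 1 \<le> ereal (real (p - 1))" using p3 by simp
  then have B: "v (c (p - 1)) \<ge> ereal 1" using c_low[of "p - 1"] by (meson order_trans order_refl)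
  have e1: "1 - c p = (1 + 1 / fact (p - 1)) - c (p - 1)" using c_p by simp
  show ?thesis using v_ge_diff[OF A B] unfolding e1[symmetric] by (simp add: one_ereal_def)
qed

lemma c_mid: assumes "p < n" "n < 2 * p" shows "v (c n) \<ge> 1"
proof -
  have nd: "\<not> p dvd n"
  proof
    assume "p dvd n" then obtain k where nk: "n = p * k" by blast
    have "k \<ge> 2"
    proof (rule ccontr)
      assume "\<not> k \<ge> 2" then have "k = 0 \<or> k = 1" by auto
      then show False using nk assms by auto
    qed
    then have "p * 2 \<le> p * k" by simp
    then show False using assms nk by simp
  qed
  obtain m where m: "n = Suc m" using assms by (cases n) auto
  have "v (c n) = v (of_nat n * c n)" using v_notdvd_mult[OF nd] by simp
  also have "of_nat n * c n = of_nat p * (c m - h m)" using rec[of m] m by (simp add: right_diff_distrib)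
  finally have "v (c n) = v (of_nat p * (c m - h m))" .
  also have "\<dots> = 1 + v (c m - h m)" by (simp add: v_mult)
  also have "\<dots> \<ge> 1 + 0"
    using v_ge_diff[OF int_c int_h] by (rule add_left_mono)
  finally show ?thesis by simp
qed


lemma pe: "real p * e = 1 + e"
proof -
  have "e * (real p - 1) = 1" using e_prop(1) p3 by (simp add: of_nat_diff)
  then show ?thesis by (simp add: algebra_simps)
qed

lemma coeff_bound:
  fixes Q :: "'a poly"
  assumes "\<And>n. v (coeff Q n) \<ge> ereal (C - real n * e)"
  shows "v (poly Q x) \<ge> ereal C"
  unfolding poly_altdef
proof (rule v_ge_sum)
  fix i
  have "v (x ^ i) = ereal (real i * e)" using v_pow[OF v_x] .
  then have "v (coeff Q i * x ^ i) \<ge> ereal (C - real i * e + real i * e)"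
    using assms by (intro v_ge_mult) auto
  then show "v (coeff Q i * x ^ i) \<ge> ereal C" by simp
qed simp

lemma main: "v ((poly (TX p) x) ^ p - 1) \<ge> ereal (2 + e)"
proof -
  define Q where "Q = TX p ^ p - 1 - monom (c p) p + monom (-(of_nat p * c p)) 1"
  have xpow: "x ^ p = - of_nat p * x"
  proof -
    have "x ^ p = x ^ Suc (p - 1)" using p3 by simp
    also have "\<dots> = x * x ^ (p - 1)" by (rule power_Suc)
    finally show ?thesis using xp by simp
  qed
  have polyQ: "poly Q x = (poly (TX p) x) ^ p - 1"
    unfolding Q_def by (simp add: poly_monom xpow poly_power)
  have coeffQ: "coeff Q n = c n - (if n = 0 then 1 else 0) - (if n = p then c p else 0)
      + (if n = 1 then - (of_nat p * c p) else 0)" for n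
    unfolding Q_def c_def by (simp add: coeff_1)
  have ep: "e > 0" using e_prop by simp
  have bound: "v (coeff Q n) \<ge> ereal (2 + e - real n * e)" for n
  proof -
    consider "n = 0" | "n = 1" | "2 \<le> n \<and> n \<le> p - 1" | "n = p" | "p < n \<and> n < 2 * p" | "2 * p \<le> n"
      by linarith
    then show ?thesis
    proof cases
      case 1
      then show ?thesis using coeffQ[of n] c0 p3 by simp
    next
      case 2
      then have cq: "coeff Q n = of_nat p * (1 - c p)" using coeffQ[of n] c1 p3 by (simp add: algebra_simps)
      have "v (of_nat p * (1 - c p)) = 1 + v (1 - c p)" by (simp add: v_mult)
      also have "\<dots> \<ge> 1 + 1" using v_one_minus_cp by (rule add_left_mono)
      finally have "v (coeff Q n) \<ge> ereal 2" using cq by (simp add: one_ereal_def)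
      then show ?thesis using 2 by simp
    next
      case 3
      then have "n \<noteq> p" "n \<noteq> 0" "n \<noteq> 1" using p3 by auto
      then have cq: "coeff Q n = c n" using coeffQ[of n] by simp
      have "real n * e \<ge> 2 * e" using 3 ep by (intro mult_right_mono) auto
      moreover have "real n \<ge> 2" using 3 by simp
      ultimately have "2 + e - real n * e \<le> real n" using ep by linarith
      then have "ereal (2 + e - real n * e) \<le> ereal (real n)" by simp
      moreover have "ereal (real n) \<le> v (c n)" using c_low[of n] 3 by simp
      ultimately show ?thesis unfolding cq by (rule order_trans)
    next
      case 4
      then show ?thesis using coeffQ[of n] p3 by simp
    next
      case 5
      then have cq: "coeff Q n = c n" using coeffQ[of n] p3 by simp
      have "real n * e \<ge> real p * e" using 5 ep by (intro mult_right_mono) auto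
      then have "ereal (2 + e - real n * e) \<le> 1" using pe by (simp add: one_ereal_def)
      moreover have "1 \<le> v (c n)" using c_mid[of n] 5 by simp
      ultimately show ?thesis unfolding cq by (rule order_trans)
    next
      case 6
      then have cq: "coeff Q n = c n" using coeffQ[of n] p3 by simp
      have "real n * e \<ge> real (2 * p) * e" using 6 ep by (intro mult_right_mono) auto
      moreover have "real (2 * p) * e = 2 + 2 * e" using pe by (simp add: algebra_simps)
      ultimately have "2 + e - real n * e \<le> 0" using ep by linarith
      then have "ereal (2 + e - real n * e) \<le> 0" by (simp add: zero_ereal_def)
      then show ?thesis using int_c[of n] unfolding cq by (rule order_trans)
    qed
  qed
  show ?thesis using coeff_bound[OF bound] polyQ by simp
qed

end

theorem proposition3p16:
  fixes p :: nat and v :: "'a::field_char_0 \<Rightarrow> ereal" and P :: "rat \<Rightarrow> 'a" and \<zeta> :: 'a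
  assumes "prime p" and "p \<ge> 3"
    and "is_valuation p v"
    and "is_rat_power_system p P"
    and "primitive_root_of_unity (2 * (p - 1)) \<zeta>"
  shows "bigO_p v
           ((\<Sum>l = 0..p - 1. ((-1) ^ l / fact l) * \<zeta> ^ l * P (of_nat l / of_nat (p - 1))) ^ p - 1)
           (2 + 1 / real (p - 1))"
proof -
  note pr = assms(1) and p3 = assms(2)
  have Padd: "P (a + b) = P a * P b" for a b using assms(4) unfolding is_rat_power_system_def by blast
  have P1: "P 1 = of_nat p" using assms(4) unfolding is_rat_power_system_def by blast
  have P0: "P 0 = 1"
  proof -
    have "P 1 = P 1 * P 0" using Padd[of 1 0] by simp
    moreover have "P 1 \<noteq> 0" using P1 p3 by simp
    ultimately show ?thesis by simp
  qed
  have Ppow: "P (of_nat l * r) = P r ^ l" for l r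
  proof (induction l)
    case (Suc l)
    have "P (of_nat (Suc l) * r) = P (r + of_nat l * r)" by (simp add: algebra_simps)
    also have "\<dots> = P r * P (of_nat l * r)" by (rule Padd)
    finally show ?case using Suc by simp
  qed (simp add: P0)
  define w where "w = P (1 / of_nat (p - 1))"
  have Pl: "P (of_nat l / of_nat (p - 1)) = w ^ l" for l
    using Ppow[of l "1 / of_nat (p - 1)"] unfolding w_def by simp
  have wp: "w ^ (p - 1) = of_nat p"
  proof -
    have "w ^ (p - 1) = P (of_nat (p - 1) * (1 / of_nat (p - 1)))" unfolding w_def by (rule Ppow[symmetric])
    also have "of_nat (p - 1) * (1 / of_nat (p - 1)) = (1 :: rat)" using p3 by simp
    finally show ?thesis using P1 by simp
  qed
  have z2: "(\<zeta> ^ (p - 1)) ^ 2 = 1"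
    using assms(5) unfolding primitive_root_of_unity_def by (simp add: power_mult[symmetric] mult.commute)
  have zn: "\<zeta> ^ (p - 1) \<noteq> 1"
    using assms(5) p3 unfolding primitive_root_of_unity_def by auto
  have zm: "\<zeta> ^ (p - 1) = -1" using z2 zn by (simp add: power2_eq_1_iff)
  have oddp: "odd p" using pr p3 by (intro prime_odd_nat) auto
  have ev: "even (p - 1)" using oddp p3 by simp
  define x where "x = - \<zeta> * w"
  have xp: "x ^ (p - 1) = - of_nat p"
  proof -
    have g: "(- \<zeta> * w) ^ n = (-1) ^ n * \<zeta> ^ n * w ^ n" for n :: nat
    proof -
      have "- \<zeta> * w = (-1) * \<zeta> * w" by simp
      then show ?thesis by (simp only: power_mult_distrib)
    qed
    have m1: "(-1) ^ (p - 1) = (1 :: 'a)" by (rule neg_one_even_power[OF ev])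
    show ?thesis unfolding x_def g m1 zm wp by simp
  qed
  interpret vctx2 p v x
    by unfold_locales (use assms xp in auto)
  have sum_eq: "(\<Sum>l = 0..p - 1. ((-1) ^ l / fact l) * \<zeta> ^ l * P (of_nat l / of_nat (p - 1)))
      = poly (TX p) x"
  proof -
    have "{0..p - 1} = {..<p}" using p3 by auto
    moreover have g: "(- \<zeta> * w) ^ n = (-1) ^ n * \<zeta> ^ n * w ^ n" for n :: nat
    proof -
      have "- \<zeta> * w = (-1) * \<zeta> * w" by simp
      then show ?thesis by (simp only: power_mult_distrib)
    qed
    ultimately show ?thesis unfolding poly_TX Pl x_def
      by (intro sum.cong) (simp_all add: divide_inverse mult_ac)
  qed
  show ?thesis unfolding bigO_p_def sum_eq using main unfolding e_def .
qed

end
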